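(* Let $0\leq B<1$, $q\geq3$, $\Delta\geq3$, and $d=\Delta-1$. If $B\geq\frac{\Delta-q}{\Delta}$, then every positive solution $R_1,\dots,R_q,C_1,\dots,C_q>0$ of the system \[R_i\propto\Big(BC_i+\sum_{j\neq i}C_j\Big)^{d},\qquad C_j\propto\Big(BR_j+\sum_{i\neq j}R_i\Big)^{d}\qquad(i,j\in[q])\] (proportionality constants independent of $i$, resp. $j$) satisfies $R_1=\dots=R_q$ and $C_1=\dots=C_q$.
   Context: This system is the tree recursion (fixpoint) system for the antiferromagnetic $q$-state Potts model with parameter $B$ on the $\Delta$-regular tree; $B=0$ corresponds to $q$-colorings. *)

theory Defs
  imports "HOL-Analysis.Analysis"
begin

end

theory Submission imports Defs begin

lemma bern_strict:
  fixes x :: real and n :: nat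
  assumes "-1 \<le> x" "x \<noteq> 0" "2 \<le> n"
  shows "1 + real n * x < (1+x)^n"
  using assms(3)
proof (induction n rule: dec_induct)
  case base
  have "0 < x^2" using assms(2) by simp
  then show ?case by (simp add: power2_eq_square algebra_simps)
next
  case (step n)
  have "1 + real (Suc n) * x < 1 + real (Suc n) * x + real n * x^2"
    using assms(2) step(1) by simp
  also have "\<dots> = (1 + x) * (1 + real n * x)"
    by (simp add: power2_eq_square algebra_simps)
  also have "\<dots> \<le> (1 + x) * (1+x)^n"
    using step(3) assms(1) by (intro mult_left_mono) auto
  finally show ?case by simp
qed

lemma tangent:
  fixes x a :: real and n :: nat
  assumes "0 \<le> x" "0 < a"
  shows "a^n + real n * a^(n-1) * (x-a) \<le> x^n"
proof (cases n)
  case 0 then show ?thesis by simp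
next
  case (Suc m)
  have z: "-1 \<le> x/a - 1" using assms by simp
  have "1 + real n * (x/a - 1) \<le> (1 + (x/a - 1))^n"
    by (rule Bernoulli_inequality[OF z])
  then have "a^n * (1 + real n * (x/a - 1)) \<le> a^n * (x/a)^n"
    using assms by (intro mult_left_mono) auto
  moreover have "a^n * (x/a)^n = x^n" using assms by (simp add: power_divide)
  moreover have "a^n * (1 + real n * (x/a - 1)) = a^n + real n * a^(n-1) * (x-a)"
    using assms Suc by (simp add: algebra_simps power_Suc field_simps)
  ultimately show ?thesis by simp
qed

lemma power_mean:
  fixes x :: "nat \<Rightarrow> real" and n q :: nat
  assumes "0 < q" "\<forall>i<q. 0 \<le> x i"
  shows "real q * ((\<Sum>i<q. x i) / real q)^n \<le> (\<Sum>i<q. x i ^ n)"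
proof -
  define a where "a = (\<Sum>i<q. x i) / real q"
  have a0: "0 \<le> a" unfolding a_def using assms by (auto intro!: sum_nonneg divide_nonneg_nonneg)
  show ?thesis
  proof (cases "a = 0")
    case True
    then show ?thesis
    proof (cases n)
      case 0 then show ?thesis by simp
    next
      case (Suc m)
      have "0 \<le> (\<Sum>i<q. x i ^ n)" using assms by (auto intro!: sum_nonneg)
      moreover have "real q * a^n = 0" using True Suc by simp
      ultimately show ?thesis unfolding a_def[symmetric] by linarith
    qed
  next
    case False
    then have ap: "0 < a" using a0 by simp
    define k where "k = real n * a^(n-1)"
    have "(\<Sum>i<q. a^n + k * (x i - a)) \<le> (\<Sum>i<q. x i ^ n)"
      unfolding k_def using assms ap by (intro sum_mono tangent) auto
    moreover have "(\<Sum>i<q. a^n + k * (x i - a)) = real q * a^n"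
    proof -
      have "(\<Sum>i<q. x i - a) = (\<Sum>i<q. x i) - real q * a"
        by (simp add: sum_subtractf)
      also have "\<dots> = 0" unfolding a_def using assms by simp
      finally have T0: "(\<Sum>i<q. x i - a) = 0" .
      have "(\<Sum>i<q. a^n + k * (x i - a)) = (\<Sum>i<q. a^n) + k * (\<Sum>i<q. x i - a)"
        by (simp only: sum.distrib sum_distrib_left)
      then show ?thesis using T0 by simp
    qed
    ultimately show ?thesis unfolding a_def[symmetric] by linarith
  qed
qed

lemma amgm:
  fixes a c :: real and n :: nat
  assumes "0 \<le> a" "0 < c" "1 \<le> n"
  shows "a * c^n \<le> ((a + real n * c)/(real n + 1))^(n+1)"
    and "a \<noteq> c \<Longrightarrow> a * c^n < ((a + real n * c)/(real n + 1))^(n+1)"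
proof -
  define w where "w = (a/c - 1)/(real n + 1)"
  have n1: "real n + 1 > 0" by simp
  have ac0: "0 \<le> a/c" using assms by simp
  have "-(real n + 1) \<le> a/c - 1" using ac0 by simp
  then have w1: "-1 \<le> w" unfolding w_def using n1
    by (simp add: le_divide_eq)
  have ca: "c*(a/c - 1) = a - c" using assms by (simp add: right_diff_distrib)
  then have e0: "c * w = (a - c)/(real n + 1)" unfolding w_def
    by (metis times_divide_eq_right)
  have "(a + real n * c)/(real n + 1) = ((real n + 1)*c + (a - c))/(real n + 1)"
    by (simp add: algebra_simps)
  also have "\<dots> = c + (a - c)/(real n + 1)" using n1 by (simp add: add_divide_distrib)
  finally have eq1: "(a + real n * c)/(real n + 1) = c * (1 + w)" using e0
    by (simp add: distrib_left)
  have r: "real (n+1) = real n + 1" by simp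
  have "real (n+1) * w = (real n + 1) * ((a/c-1)/(real n + 1))" unfolding r w_def by (rule refl)
  also have "\<dots> = a/c - 1" unfolding times_divide_eq_right using n1 by (intro nonzero_mult_div_cancel_left) simp
  finally have rw: "real (n+1) * w = a/c - 1" .
  have eq2: "c^(n+1) * (1 + real (n+1) * w) = a * c^n"
  proof -
    have "c^(n+1) * (1 + real (n+1) * w) = c^n * (c * (a/c))" unfolding rw by simp
    also have "c * (a/c) = a" using assms by simp
    finally show ?thesis by simp
  qed
  have pw: "(c * (1 + w))^(n+1) = c^(n+1) * (1+w)^(n+1)" by (rule power_mult_distrib)
  have "c^(n+1) * (1 + real (n+1) * w) \<le> c^(n+1) * (1+w)^(n+1)"
    using assms by (intro mult_left_mono Bernoulli_inequality w1) auto
  then show "a * c^n \<le> ((a + real n * c)/(real n + 1))^(n+1)"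
    unfolding eq1 pw eq2 .
  assume "a \<noteq> c"
  then have "w \<noteq> 0" using e0 assms n1 by auto
  then have "c^(n+1) * (1 + real (n+1) * w) < c^(n+1) * (1+w)^(n+1)"
    using assms by (intro mult_strict_left_mono bern_strict w1) auto
  then show "a * c^n < ((a + real n * c)/(real n + 1))^(n+1)"
    unfolding eq1 pw eq2 .
qed

lemma core:
  fixes b \<kappa> mu SR m q z :: real and d :: nat
  assumes d2: "2 \<le> d" and b0: "0<b" and k0: "0<\<kappa>" and mu0: "0<mu" and SR0: "0<SR"
    and z0: "0 < z" and V0: "0 < SR - b*z^d" and m0: "0 < m" and q0: "0 < q"
    and K: "q^(d+1) * \<kappa>^d * mu^d * m^(d*(d+1)) * SR^(d*d) \<le> SR"
    and h1: "b*real d \<le> q*m" and h2: "real d/(real d+1) \<le> m"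
  shows "\<kappa>*mu*b^2*(real d)^2*(z*(SR - b*z^d))^(d-1) \<le> 1"
    and "b*(real d+1)*z^d \<noteq> SR \<Longrightarrow> \<kappa>*mu*b^2*(real d)^2*(z*(SR - b*z^d))^(d-1) < 1"
proof -
  define V where "V = SR - b*z^d"
  define D where "D = real d"
  define X where "X = \<kappa>*mu*b^2*D^2*(z*V)^(d-1)"
  define P where "P = (D*SR/(D+1))^(d+1)/(b*D)"
  define Y where "Y = \<kappa>^d*mu^d*(b*D)^(2*d)*P^(d-1)"
  have D2: "2 \<le> D" using d2 unfolding D_def by simp
  have Vp: "0 < V" using V0 V_def by simp
  have s: "b*D*z^d + D*V = D*SR" unfolding V_def by (simp add: algebra_simps)
  have bD: "0 < b*D" using b0 D2 by simp
  have am: "(b*D*z^d) * V^d \<le> ((b*D*z^d + real d*V)/(real d+1))^(d+1)"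
    using amgm(1)[of "b*D*z^d" V d] Vp bD z0 d2 by simp
  then have am': "(b*D)*(z^d*V^d) \<le> (D*SR/(D+1))^(d+1)" using s unfolding D_def by (simp add: mult_ac)
  then have "z^d*V^d*(b*D) \<le> (D*SR/(D+1))^(d+1)" by (simp only: mult.commute)
  then have zP: "z^d*V^d \<le> P" unfolding P_def by (simp only: pos_le_divide_eq[OF bD])
  have Xd: "X^d = \<kappa>^d*mu^d*(b*D)^(2*d)*(z^d*V^d)^(d-1)"
  proof -
    have "X^d = \<kappa>^d*mu^d*(b^2*D^2)^d*((z*V)^(d-1))^d" unfolding X_def by (simp add: power_mult_distrib)
    also have "((z*V)^(d-1))^d = (z^d*V^d)^(d-1)"
      by (simp add: power_mult[symmetric] power_mult_distrib[symmetric] mult.commute)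
    also have "(b^2*D^2)^d = (b*D)^(2*d)"
      by (simp add: power_mult power_mult_distrib)
    finally show ?thesis by simp
  qed
  have e1: "2*d = (d+1)+(d-1)" using d2 by simp
  have e2: "(d+1)*(d-1) + 1 = d*d" using d2 by (cases d) auto
  have Q0: "0 < q^(d+1)*m^(d*(d+1))" using q0 m0 by simp
  have A: "\<kappa>^d*mu^d*SR^(d*d) \<le> SR / (q^(d+1)*m^(d*(d+1)))"
    using K Q0 by (simp add: pos_le_divide_eq mult_ac)
  have YSR: "Y*SR = (\<kappa>^d*mu^d*SR^(d*d)) * ((b*D)^(d+1)*(D/(D+1))^((d+1)*(d-1)))"
  proof -
    have "P^(d-1) = (D/(D+1))^((d+1)*(d-1)) * SR^((d+1)*(d-1)) / (b*D)^(d-1)"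
    proof -
      have "P^(d-1) = ((D*SR/(D+1))^(d+1))^(d-1)/(b*D)^(d-1)" unfolding P_def by (rule power_divide)
      also have "((D*SR/(D+1))^(d+1))^(d-1) = (D*SR/(D+1))^((d+1)*(d-1))" by (rule power_mult[symmetric])
      also have "D*SR/(D+1) = (D/(D+1))*SR" by simp
      also have "((D/(D+1))*SR)^((d+1)*(d-1)) = (D/(D+1))^((d+1)*(d-1)) * SR^((d+1)*(d-1))" by (rule power_mult_distrib)
      finally show ?thesis .
    qed
    moreover have "(b*D)^(2*d) = (b*D)^(d+1)*(b*D)^(d-1)" unfolding e1 by (simp add: power_add)
    moreover have "SR^((d+1)*(d-1))*SR = SR^(d*d)" unfolding e2[symmetric] by (simp add: power_add)
    ultimately show ?thesis unfolding Y_def using bD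
      by (simp add: field_simps)
  qed
  have fin: "(b*D)^(d+1)*(D/(D+1))^((d+1)*(d-1)) \<le> q^(d+1)*m^(d*(d+1))"
  proof -
    have "b*D*(D/(D+1))^(d-1) \<le> (q*m)*m^(d-1)"
      using h1 h2 bD D2 m0 q0 unfolding D_def
      by (intro mult_mono[of "b*real d" "q*m"] power_mono) auto
    also have "(q*m)*m^(d-1) = q*m^d" using d2 by (cases d) auto
    finally have ineq: "(b*D*(D/(D+1))^(d-1))^(d+1) \<le> (q*m^d)^(d+1)"
      using bD D2 by (intro power_mono) auto
    have eq1: "(b*D*(D/(D+1))^(d-1))^(d+1) = (b*D)^(d+1)*(D/(D+1))^((d+1)*(d-1))"
      by (simp only: power_mult_distrib power_mult[symmetric] mult.commute)
    have eq2: "(q*m^d)^(d+1) = q^(d+1)*m^(d*(d+1))"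
      by (simp only: power_mult_distrib power_mult[symmetric])
    show ?thesis using ineq unfolding eq1 eq2 .
  qed
  have Y1: "Y \<le> 1"
  proof -
    have "Y*SR \<le> SR / (q^(d+1)*m^(d*(d+1))) * ((b*D)^(d+1)*(D/(D+1))^((d+1)*(d-1)))"
      unfolding YSR using A bD D2 by (intro mult_right_mono) auto
    also have "\<dots> \<le> SR / (q^(d+1)*m^(d*(d+1))) * (q^(d+1)*m^(d*(d+1)))"
      using fin SR0 Q0 by (intro mult_left_mono) auto
    also have "\<dots> = SR" using Q0 by (metis less_irrefl nonzero_eq_divide_eq)
    finally show ?thesis using SR0 by simp
  qed
  have X0: "0 \<le> X" unfolding X_def using k0 mu0 z0 Vp by simp
  have Xle: "X^d \<le> Y"
  proof -
    have "(z^d*V^d)^(d-1) \<le> P^(d-1)" using zP z0 Vp by (intro power_mono) auto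
    then show ?thesis unfolding Xd Y_def using k0 mu0 bD by (intro mult_left_mono) auto
  qed
  show "\<kappa>*mu*b^2*(real d)^2*(z*(SR - b*z^d))^(d-1) \<le> 1"
  proof -
    have "X \<le> 1"
    proof (rule ccontr)
      assume "\<not> X \<le> 1"
      then have "1 < X^d" using d2 by (intro one_less_power) auto
      then show False using Xle Y1 by simp
    qed
    then show ?thesis unfolding X_def V_def D_def .
  qed
  assume ne: "b*(real d+1)*z^d \<noteq> SR"
  have "b*D*z^d \<noteq> V" using ne unfolding V_def D_def by (auto simp: algebra_simps)
  then have am2: "(b*D*z^d) * V^d < ((b*D*z^d + real d*V)/(real d+1))^(d+1)"
    using amgm(2)[of "b*D*z^d" V d] Vp bD z0 d2 by simp
  then have "(b*D)*(z^d*V^d) < (D*SR/(D+1))^(d+1)" using s unfolding D_def by (simp add: mult_ac)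
  then have "z^d*V^d*(b*D) < (D*SR/(D+1))^(d+1)" by (simp only: mult.commute)
  then have zP2: "z^d*V^d < P" unfolding P_def by (simp only: pos_less_divide_eq[OF bD])
  have Xlt: "X^d < Y"
  proof -
    have "(z^d*V^d)^(d-1) < P^(d-1)" using zP2 z0 Vp d2 by (intro power_strict_mono) auto
    then show ?thesis unfolding Xd Y_def using k0 mu0 bD by (intro mult_strict_left_mono) auto
  qed
  have "X < 1"
  proof (rule ccontr)
    assume "\<not> X < 1"
    then have "1 \<le> X^d" by (intro one_le_power) auto
    then show False using Xlt Y1 by simp
  qed
  then show "\<kappa>*mu*b^2*(real d)^2*(z*(SR - b*z^d))^(d-1) < 1" unfolding X_def V_def D_def .
qed

lemma pos_rest:
  fixes f :: "nat \<Rightarrow> real" and B :: real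
  assumes "\<forall>j<q. 0 < f j" "3 \<le> q" "i < q" "0 \<le> B"
  shows "B*f i + (\<Sum>j\<in>{0..<q}-{i}. f j) = (\<Sum>j\<in>{0..<q}. f j) - (1-B)*f i"
    and "0 < (\<Sum>j\<in>{0..<q}. f j) - (1-B)*f i"
proof -
  have sr: "(\<Sum>j\<in>{0..<q}. f j) = f i + (\<Sum>j\<in>{0..<q}-{i}. f j)"
    using assms(3) by (intro sum.remove) auto
  then show "B*f i + (\<Sum>j\<in>{0..<q}-{i}. f j) = (\<Sum>j\<in>{0..<q}. f j) - (1-B)*f i"
    by (simp add: algebra_simps)
  have ne: "(if i = 0 then 1 else 0) \<in> {0..<q}-{i}" using assms(2,3) by auto
  have "0 < (\<Sum>j\<in>{0..<q}-{i}. f j)"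
    using ne assms(1) by (intro sum_pos) auto
  moreover have "0 \<le> B * f i" using assms by (simp add: less_imp_le)
  ultimately show "0 < (\<Sum>j\<in>{0..<q}. f j) - (1-B)*f i" using sr by (simp add: algebra_simps)
qed

lemma deriv_f:
  fixes \<kappa> b mu SR z :: real and d :: nat
  assumes "\<kappa> \<noteq> 0"
  shows "((\<lambda>t. t/\<kappa> + b*mu*(SR - b*t^d)^d) has_real_derivative (1/\<kappa> - b^2*(real d)^2*mu*z^(d-1)*(SR - b*z^d)^(d-1))) (at z)"
  using assms
  by (auto intro!: derivative_eq_intros simp: power2_eq_square algebra_simps)

theorem lemma26:
  fixes B :: real and q \<Delta> :: nat and R C :: "nat \<Rightarrow> real"
  assumes "0 \<le> B" and "B < 1" and "q \<ge> 3" and "\<Delta> \<ge> 3"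
    and "B \<ge> (real \<Delta> - real q) / real \<Delta>"
    and "\<forall>i<q. R i > 0" and "\<forall>j<q. C j > 0"
    and "\<exists>lam::real. \<forall>i<q.
           R i = lam * (B * C i + (\<Sum>j\<in>({0..<q} - {i}). C j)) ^ (\<Delta> - 1)"
    and "\<exists>mu::real. \<forall>j<q.
           C j = mu * (B * R j + (\<Sum>i\<in>({0..<q} - {j}). R i)) ^ (\<Delta> - 1)"
  shows "(\<forall>i<q. \<forall>j<q. R i = R j) \<and> (\<forall>i<q. \<forall>j<q. C i = C j)"
proof -
  obtain lam where lam: "\<forall>i<q. R i = lam * (B * C i + (\<Sum>j\<in>({0..<q} - {i}). C j)) ^ (\<Delta> - 1)"
    using assms(8) by blast
  obtain mu where mu: "\<forall>j<q. C j = mu * (B * R j + (\<Sum>i\<in>({0..<q} - {j}). R i)) ^ (\<Delta> - 1)"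
    using assms(9) by blast
  define d where "d = \<Delta> - 1"
  define b where "b = 1 - B"
  define SC where "SC = (\<Sum>j\<in>{0..<q}. C j)"
  define SR where "SR = (\<Sum>j\<in>{0..<q}. R j)"
  have d2: "2 \<le> d" using assms(4) by (simp add: d_def)
  have dpos: "0 < d" using d2 by simp
  have b0: "0 < b" using assms(2) by (simp add: b_def)
  have q0: "0 < q" using assms(3) by simp
  have Dd: "real d + 1 = real \<Delta>" using assms(4) by (simp add: d_def of_nat_diff)
  have bD: "b * (real d + 1) \<le> real q"
  proof -
    have "real \<Delta> - real q \<le> B * real \<Delta>" using assms(5) assms(4)
      by (simp add: pos_divide_le_eq)
    then show ?thesis unfolding Dd b_def by (simp add: algebra_simps)
  qed
  have T: "\<And>i. i<q \<Longrightarrow> B * C i + (\<Sum>j\<in>({0..<q} - {i}). C j) = SC - b * C i"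
    "\<And>i. i<q \<Longrightarrow> 0 < SC - b * C i"
    using pos_rest[OF assms(7) assms(3) _ assms(1)] unfolding SC_def b_def by auto
  have U: "\<And>i. i<q \<Longrightarrow> B * R i + (\<Sum>j\<in>({0..<q} - {i}). R j) = SR - b * R i"
    "\<And>i. i<q \<Longrightarrow> 0 < SR - b * R i"
    using pos_rest[OF assms(6) assms(3) _ assms(1)] unfolding SR_def b_def by auto
  have Rf: "\<And>i. i<q \<Longrightarrow> R i = lam * (SC - b*C i)^d" using lam T(1) unfolding d_def by auto
  have Cf: "\<And>i. i<q \<Longrightarrow> C i = mu * (SR - b*R i)^d" using mu U(1) unfolding d_def by auto
  have lam0: "0 < lam"
  proof -
    have "0 < lam * (SC - b*C 0)^d" using Rf[OF q0] assms(6) q0 by auto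
    moreover have "0 < (SC - b*C 0)^d" using T(2)[OF q0] by simp
    ultimately show ?thesis by (metis zero_less_mult_pos2)
  qed
  have mu0: "0 < mu"
  proof -
    have "0 < mu * (SR - b*R 0)^d" using Cf[OF q0] assms(7) q0 by auto
    moreover have "0 < (SR - b*R 0)^d" using U(2)[OF q0] by simp
    ultimately show ?thesis by (metis zero_less_mult_pos2)
  qed
  have SC0: "0 < SC" unfolding SC_def using assms(7) q0 by (intro sum_pos) auto
  have SR0: "0 < SR" unfolding SR_def using assms(6) q0 by (intro sum_pos) auto
  define \<kappa> where "\<kappa> = root d lam"
  define \<nu> where "\<nu> = root d mu"
  have k0: "0 < \<kappa>" unfolding \<kappa>_def using lam0 dpos by simp
  have n0: "0 < \<nu>" unfolding \<nu>_def using mu0 dpos by simp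
  have kd: "\<kappa>^d = lam" unfolding \<kappa>_def using lam0 dpos by (simp add: real_root_pow_pos)
  have nd: "\<nu>^d = mu" unfolding \<nu>_def using mu0 dpos by (simp add: real_root_pow_pos)
  define x where "x = (\<lambda>i. \<kappa> * (SC - b * C i))"
  define y where "y = (\<lambda>i. \<nu> * (SR - b * R i))"
  have xd: "\<And>i. i<q \<Longrightarrow> x i ^ d = R i" unfolding x_def using Rf kd by (simp add: power_mult_distrib)
  have yd: "\<And>i. i<q \<Longrightarrow> y i ^ d = C i" unfolding y_def using Cf nd by (simp add: power_mult_distrib)
  have xp: "\<And>i. i<q \<Longrightarrow> 0 < x i" unfolding x_def using k0 T(2) by simp
  have yp: "\<And>i. i<q \<Longrightarrow> 0 < y i" unfolding y_def using n0 U(2) by simp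
  define m where "m = (real q - b) / real q"
  have m0: "0 < m"
  proof -
    have "0 < b * real d" using b0 d2 by simp
    then have "b < b*(real d+1)" by (simp add: algebra_simps)
    then have "b < real q" using bD by simp
    then show ?thesis using q0 unfolding m_def by simp
  qed
  have sx: "(\<Sum>i<q. x i) / real q = \<kappa> * m * SC"
  proof -
    have "(\<Sum>i<q. x i) = \<kappa> * (real q * SC - b * SC)"
      unfolding x_def SC_def
      by (simp add: sum_distrib_left[symmetric] sum_subtractf atLeast0LessThan)
    then show ?thesis unfolding m_def using q0 by (simp add: field_simps)
  qed
  have sy: "(\<Sum>i<q. y i) / real q = \<nu> * m * SR"
  proof -
    have "(\<Sum>i<q. y i) = \<nu> * (real q * SR - b * SR)"
      unfolding y_def SR_def
      by (simp add: sum_distrib_left[symmetric] sum_subtractf atLeast0LessThan)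
    then show ?thesis unfolding m_def using q0 by (simp add: field_simps)
  qed
  have J1: "real q * (\<kappa> * m * SC)^d \<le> SR"
  proof -
    have "real q * ((\<Sum>i<q. x i) / real q)^d \<le> (\<Sum>i<q. x i ^ d)"
      using q0 xp by (intro power_mean) (auto simp: less_imp_le)
    also have "(\<Sum>i<q. x i ^ d) = SR" unfolding SR_def using xd by (simp add: atLeast0LessThan)
    finally show ?thesis unfolding sx .
  qed
  have J2: "real q * (\<nu> * m * SR)^d \<le> SC"
  proof -
    have "real q * ((\<Sum>i<q. y i) / real q)^d \<le> (\<Sum>i<q. y i ^ d)"
      using q0 yp by (intro power_mean) (auto simp: less_imp_le)
    also have "(\<Sum>i<q. y i ^ d) = SC" unfolding SC_def using yd by (simp add: atLeast0LessThan)
    finally show ?thesis unfolding sy .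
  qed
  have K: "real q^(d+1) * \<kappa>^d * mu^d * m^(d*(d+1)) * SR^(d*d) \<le> SR"
  proof -
    have "(real q * (\<nu> * m * SR)^d)^d \<le> SC^d"
      using J2 n0 m0 SR0 q0 by (intro power_mono) auto
    then have "real q * \<kappa>^d * m^d * (real q * (\<nu> * m * SR)^d)^d \<le> real q * \<kappa>^d * m^d * SC^d"
      using q0 k0 m0 by (intro mult_left_mono) auto
    also have "\<dots> = real q * (\<kappa> * m * SC)^d" by (simp add: power_mult_distrib)
    also have "\<dots> \<le> SR" by (rule J1)
    finally have L: "real q * \<kappa>^d * m^d * (real q * (\<nu> * m * SR)^d)^d \<le> SR" .
    have "real q * \<kappa>^d * m^d * (real q * (\<nu> * m * SR)^d)^d
        = real q * \<kappa>^d * m^d * (real q^d * (\<nu>^d)^d * (m^d)^d * (SR^d)^d)"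
      by (simp add: power_mult_distrib)
    also have "\<dots> = real q^(d+1) * \<kappa>^d * mu^d * m^(d*(d+1)) * SR^(d*d)"
      unfolding nd by (simp add: power_mult[symmetric] power_add algebra_simps)
    finally have E: "real q * \<kappa>^d * m^d * (real q * (\<nu> * m * SR)^d)^d = real q^(d+1) * \<kappa>^d * mu^d * m^(d*(d+1)) * SR^(d*d)" .
    show ?thesis using L unfolding E .
  qed
  have qm: "real q * m = real q - b" unfolding m_def using q0 by simp
  have h1: "b * real d \<le> real q * m" unfolding qm using bD by (simp add: algebra_simps)
  have h2: "real d / (real d + 1) \<le> m"
  proof -
    have a: "b / real q \<le> 1/(real d+1)" using bD q0 by (simp add: divide_simps mult.commute)
    have "m = 1 - b/real q" unfolding m_def using q0 by (simp add: diff_divide_distrib)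
    moreover have "real d/(real d+1) = 1 - 1/(real d+1)" by (simp add: field_simps)
    ultimately show ?thesis using a by linarith
  qed
  define f where "f = (\<lambda>t. t/\<kappa> + b*mu*(SR - b*t^d)^d)"
  define f' where "f' = (\<lambda>z. 1/\<kappa> - b^2*(real d)^2*mu*z^(d-1)*(SR - b*z^d)^(d-1))"
  have fder: "\<And>z. (f has_real_derivative f' z) (at z)"
    unfolding f_def f'_def using k0 by (intro deriv_f) auto
  have f'eq: "\<And>z. f' z = (1 - \<kappa>*mu*b^2*(real d)^2*(z*(SR - b*z^d))^(d-1)) / \<kappa>"
  proof -
    fix z
    have pm: "(z*(SR - b*z^d))^(d-1) = z^(d-1)*(SR - b*z^d)^(d-1)" by (rule power_mult_distrib)
    show "f' z = (1 - \<kappa>*mu*b^2*(real d)^2*(z*(SR - b*z^d))^(d-1)) / \<kappa>"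
      unfolding f'_def pm using k0 by (simp add: field_simps)
  qed
  have fnn: "\<And>z. 0 < z \<Longrightarrow> 0 < SR - b*z^d \<Longrightarrow> 0 \<le> f' z"
    unfolding f'eq using core(1)[OF d2 b0 k0 mu0 SR0 _ _ m0 _ K h1 h2] k0 q0 by simp
  have fz: "\<And>z. 0 < z \<Longrightarrow> 0 < SR - b*z^d \<Longrightarrow> f' z = 0 \<Longrightarrow> b*(real d+1)*z^d = SR"
  proof (rule ccontr)
    fix z assume z: "0 < z" "0 < SR - b*z^d" "f' z = 0" "b*(real d+1)*z^d \<noteq> SR"
    have "\<kappa>*mu*b^2*(real d)^2*(z*(SR - b*z^d))^(d-1) < 1"
      using core(2)[OF d2 b0 k0 mu0 SR0 z(1) z(2) m0 _ K h1 h2 z(4)] q0 by simp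
    then show False using z(3) k0 unfolding f'eq by simp
  qed
  have fx: "\<And>i. i<q \<Longrightarrow> f (x i) = SC"
  proof -
    fix i assume i: "i<q"
    have "x i / \<kappa> = SC - b*C i" unfolding x_def using k0 by simp
    moreover have "mu*(SR - b*(x i)^d)^d = C i" using xd[OF i] Cf[OF i] by simp
    ultimately show "f (x i) = SC" unfolding f_def by (simp add: algebra_simps)
  qed
  have noless: "\<And>i k. i<q \<Longrightarrow> k<q \<Longrightarrow> x i < x k \<Longrightarrow> False"
  proof -
    fix i k assume i: "i<q" and k: "k<q" and lt: "x i < x k"
    define a where "a = x i"
    define c where "c = x k"
    define mid where "mid = (a+c)/2"
    have a0: "0 < a" using xp[OF i] a_def by simp
    have ac: "a < mid" "mid < c" using lt unfolding mid_def a_def c_def by auto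
    have Vc: "0 < SR - b*c^d" using U(2)[OF k] xd[OF k] c_def by simp
    have dom: "\<And>z. a \<le> z \<Longrightarrow> z \<le> c \<Longrightarrow> 0 < z \<and> 0 < SR - b*z^d"
    proof -
      fix z assume "a \<le> z" "z \<le> c"
      then have "z^d \<le> c^d" "0 < z" using a0 by (auto intro: power_mono)
      moreover have "b*z^d \<le> b*c^d" using \<open>z^d \<le> c^d\<close> b0 by simp
      ultimately show "0 < z \<and> 0 < SR - b*z^d" using Vc by linarith
    qed
    obtain z1 where z1: "a < z1" "z1 < mid" "f mid - f a = (mid - a) * f' z1"
      using MVT2[OF ac(1), of f f'] fder by blast
    obtain z2 where z2: "mid < z2" "z2 < c" "f c - f mid = (c - mid) * f' z2"
      using MVT2[OF ac(2), of f f'] fder by blast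
    have dz1: "0 < z1 \<and> 0 < SR - b*z1^d" using z1 ac by (intro dom) auto
    have dz2: "0 < z2 \<and> 0 < SR - b*z2^d" using z2 ac by (intro dom) auto
    have p1: "0 \<le> f' z1" using fnn dz1 by blast
    have p2: "0 \<le> f' z2" using fnn dz2 by blast
    have fe: "f a = f c" using fx[OF i] fx[OF k] unfolding a_def c_def by simp
    have t1: "0 \<le> (mid - a) * f' z1" using p1 ac by simp
    have t2: "0 \<le> (c - mid) * f' z2" using p2 ac by simp
    have "(mid - a) * f' z1 = 0" using t1 t2 z1(3) z2(3) fe by linarith
    then have f1: "f' z1 = 0" using ac by simp
    have e1: "b*(real d+1)*z1^d = SR" using fz dz1 f1 by blast
    have "(c - mid) * f' z2 = 0" using t1 t2 z1(3) z2(3) fe by linarith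
    then have f2: "f' z2 = 0" using ac by simp
    have e2: "b*(real d+1)*z2^d = SR" using fz dz2 f2 by blast
    have nz: "b*(real d+1) \<noteq> 0" using b0 by simp
    have "b*(real d+1)*z1^d = b*(real d+1)*z2^d" using e1 e2 by simp
    then have pz: "z1^d = z2^d" using nz by (simp only: mult_cancel_left) simp
    have "z1 = z2" by (rule power_eq_imp_eq_base[OF pz _ _ dpos]) (use dz1 dz2 in auto)
    then show False using z1 z2 by simp
  qed
  have xeq: "x i = x k" if "i<q" "k<q" for i k
  proof (rule ccontr)
    assume "x i \<noteq> x k"
    then consider "x i < x k" | "x k < x i" by linarith
    then show False using noless that by cases blast+
  qed
  have Req: "R i = R k" if "i<q" "k<q" for i k
  proof -
    have "R i = x i ^ d" using xd that by simp
    also have "\<dots> = x k ^ d" using xeq[OF that] by simp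
    also have "\<dots> = R k" using xd that by simp
    finally show ?thesis .
  qed
  have Ceq: "C i = C k" if "i<q" "k<q" for i k
  proof -
    have "C i = mu * (SR - b*R i)^d" using Cf that by simp
    also have "\<dots> = mu * (SR - b*R k)^d" using Req[OF that] by simp
    also have "\<dots> = C k" using Cf that by simp
    finally show ?thesis .
  qed
  show ?thesis using Req Ceq by blast
qed

end
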